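(* Let $p$ be a prime, $R$ a ring of characteristic $p$, $R[x]$ the polynomial ring in one variable, $a\in R\setminus\{0\}$, and $\phi\in\operatorname{Aut}_RR[x]$ defined by $\phi(x)=x+a$. If $a$ is not a zero-divisor of $R$, then $R[x]^{\phi}=R[x^p-a^{p-1}x]$.
   Context: $R[x]^{\phi}:=\{u\in R[x]\mid\phi(u)=u\}$. *)

theory Defs
  imports "HOL-Computational_Algebra.Polynomial"
begin

definition shift_aut :: "'a::comm_ring_1 \<Rightarrow> 'a poly \<Rightarrow> 'a poly" where
  "shift_aut a u = pcompose u [:a, 1:]"

definition fixed_ring :: "('a::comm_ring_1 poly \<Rightarrow> 'a poly) \<Rightarrow> 'a poly set" where
  "fixed_ring \<phi> = {u. \<phi> u = u}"

definition gen_subring :: "'a::comm_ring_1 poly \<Rightarrow> 'a poly set" where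
  "gen_subring f = range (\<lambda>q. pcompose q f)"

end

theory Submission
  imports Defs "HOL-Computational_Algebra.Primes"
begin

lemma frob_add:
  fixes x y :: "'b::comm_semiring_1"
  assumes "prime p" "CHAR('b) = p"
  shows "(x + y) ^ p = x ^ p + y ^ p"
proof -
  have p0: "p > 0" using assms prime_gt_0_nat by blast
  have "(x + y) ^ p = (\<Sum>k\<le>p. of_nat (p choose k) * x ^ k * y ^ (p - k))"
    by (rule binomial_ring)
  also have "\<dots> = (\<Sum>k\<in>{0,p}. of_nat (p choose k) * x ^ k * y ^ (p - k))"
  proof (rule sum.mono_neutral_right)
    show "\<forall>i\<in>{..p} - {0, p}. of_nat (p choose i) * x ^ i * y ^ (p - i) = 0"
    proof
      fix i assume "i \<in> {..p} - {0, p}"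
      then have "0 < i" "i < p" by auto
      then have "p dvd (p choose i)" using dvd_choose_prime assms by auto
      then have "of_nat (p choose i) = (0::'b)" using assms by (simp add: of_nat_eq_0_iff_char_dvd)
      then show "of_nat (p choose i) * x ^ i * y ^ (p - i) = 0" by simp
    qed
  qed auto
  also have "\<dots> = x ^ p + y ^ p" using p0 by (simp add: add.commute)
  finally show ?thesis .
qed

lemma pcompose_power: "pcompose (q ^ n) s = (pcompose q s) ^ n"
  for q s :: "'b::comm_ring_1 poly"
  by (induct n) (simp_all add: pcompose_mult pcompose_1)

lemma pcompose_monom: "pcompose (monom c n) s = smult c (s ^ n)"
  for s :: "'b::comm_ring_1 poly"
  by (simp add: monom_altdef pcompose_smult pcompose_power pcompose_pCons)

lemma coeff_linear_power_gen:
  fixes a :: "'b::comm_ring_1"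
  shows "coeff ([:a, 1:] ^ i) k = of_nat (i choose k) * a ^ (i - k)"
proof (induct i arbitrary: k)
  case 0
  then show ?case by (cases k) auto
next
  case (Suc i)
  have "[:a, 1:] ^ Suc i = smult a ([:a, 1:] ^ i) + pCons 0 ([:a, 1:] ^ i)"
    by (simp add: mult_pCons_left)
  then have e: "coeff ([:a, 1:] ^ Suc i) k = a * coeff ([:a, 1:] ^ i) k + (case k of 0 \<Rightarrow> 0 | Suc m \<Rightarrow> coeff ([:a, 1:] ^ i) m)"
    by (simp add: coeff_pCons split: nat.splits)
  show ?case
  proof (cases k)
    case 0
    then show ?thesis using e Suc by simp
  next
    case (Suc m)
    show ?thesis
    proof (cases "m < i")
      case True
      then have "Suc i - k = Suc (i - k)" "i - m = Suc (i - k)" using Suc by auto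
      then show ?thesis using e Suc.hyps \<open>k = Suc m\<close> by (simp add: algebra_simps)
    next
      case False
      then show ?thesis using e Suc.hyps \<open>k = Suc m\<close> by (cases "m = i") (auto simp: binomial_eq_0)
    qed
  qed
qed

lemma coeff_shift:
  fixes a :: "'b::comm_ring_1"
  shows "coeff (pcompose r [:a, 1:]) k = (\<Sum>i\<le>degree r. coeff r i * of_nat (i choose k) * a ^ (i - k))"
proof -
  have "pcompose r [:a, 1:] = (\<Sum>i\<le>degree r. smult (coeff r i) ([:a, 1:] ^ i))"
    by (subst (1) poly_as_sum_of_monoms[symmetric]) (simp add: pcompose_sum pcompose_monom)
  then show ?thesis by (simp add: coeff_sum coeff_linear_power_gen mult.assoc)
qed

lemma shift_fixed_const:
  fixes a :: "'b::comm_ring_1" and r :: "'b poly"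
  assumes "prime p" "CHAR('b) = p" "\<forall>b::'b. a * b = 0 \<longrightarrow> b = 0"
    and fx: "pcompose r [:a, 1:] = r" and deg: "degree r < p"
  shows "degree r = 0"
proof (rule ccontr)
  assume nz: "degree r \<noteq> 0"
  define d where "d = degree r"
  have d0: "0 < d" "d < p" using nz deg d_def by auto
  have "coeff r (d - 1) = coeff (pcompose r [:a, 1:]) (d - 1)" using fx by simp
  also have "\<dots> = (\<Sum>i\<le>d. coeff r i * of_nat (i choose (d - 1)) * a ^ (i - (d - 1)))"
    by (simp add: coeff_shift d_def)
  also have "\<dots> = (\<Sum>i\<in>{d - 1, d}. coeff r i * of_nat (i choose (d - 1)) * a ^ (i - (d - 1)))"
  proof (rule sum.mono_neutral_right)
    show "\<forall>i\<in>{..d} - {d - 1, d}. coeff r i * of_nat (i choose (d - 1)) * a ^ (i - (d - 1)) = 0"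
    proof
      fix i assume "i \<in> {..d} - {d - 1, d}"
      then have "i < d - 1" by auto
      then show "coeff r i * of_nat (i choose (d - 1)) * a ^ (i - (d - 1)) = 0"
        by (simp add: binomial_eq_0)
    qed
  qed (use d0 in auto)
  also have "\<dots> = coeff r (d - 1) + coeff r d * of_nat d * a"
  proof -
    have "d choose (d - 1) = d choose (d - (d - 1))" by (rule binomial_symmetric) simp
    also have "\<dots> = d" using d0 by simp
    finally show ?thesis using d0 by (simp add: Suc_diff_le)
  qed
  finally have e: "coeff r d * of_nat d * a = 0" by simp
  have "coprime d p"
    using d0 \<open>prime p\<close> by (metis coprime_commute prime_imp_coprime_nat
        nat_dvd_not_less)
  then have g: "gcd d p = 1" by simp
  obtain x y where xy: "d * x = p * y + gcd d p" using bezout_nat[of d p] d0 by auto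
  have "of_nat (d * x) = (of_nat (p * y) + 1 :: 'b)" using xy g by simp
  also have "of_nat (p * y) = (0::'b)" using assms(2) by (metis of_nat_CHAR of_nat_mult mult_zero_left)
  finally have dx: "of_nat d * of_nat x = (1::'b)" by simp
  have "a * coeff r d = coeff r d * of_nat d * a * of_nat x"
    using dx by (simp add: algebra_simps) (metis mult.assoc mult.commute mult.right_neutral)
  also have "\<dots> = 0" using e by simp
  finally have "coeff r d = 0" using assms(3) by blast
  moreover have "r \<noteq> 0" using nz by auto
  ultimately show False by (simp add: d_def)
qed

lemma monic_mult_degree:
  fixes f h :: "'b::comm_ring_1 poly"
  assumes "lead_coeff f = 1" "h \<noteq> 0"
  shows "degree (f * h) = degree f + degree h"
proof (rule antisym)
  show "degree (f * h) \<le> degree f + degree h" by (rule degree_mult_le)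
  have "coeff (f * h) (degree f + degree h) = lead_coeff h"
    using assms by (simp add: coeff_mult_degree_sum)
  then show "degree f + degree h \<le> degree (f * h)"
    using assms by (intro le_degree) simp
qed

lemma fixed_in_gen:
  fixes a :: "'b::comm_ring_1" and f :: "'b poly"
  assumes "prime p" "CHAR('b) = p" "\<forall>b::'b. a * b = 0 \<longrightarrow> b = 0"
    and lf: "lead_coeff f = 1" and df: "degree f = p" and ff: "pcompose f [:a, 1:] = f"
  shows "pcompose u [:a, 1:] = u \<Longrightarrow> \<exists>q. u = pcompose q f"
proof (induct "degree u" arbitrary: u rule: less_induct)
  case less
  let ?s = "[:a, 1:] :: 'b poly"
  have p1: "p > 1" using assms(1) prime_gt_1_nat by blast
  have f0: "f \<noteq> 0" using lf by auto
  obtain g r where gr: "pseudo_divmod u f = (g, r)" by (cases "pseudo_divmod u f") auto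
  have ueq: "u = f * g + r" using pseudo_divmod(1)[OF f0 gr] lf by simp
  have rdeg: "degree r < p" using pseudo_divmod(2)[OF f0 gr] df p1 by auto
  have "u = pcompose u ?s" using less by simp
  also have "\<dots> = f * pcompose g ?s + pcompose r ?s"
    by (subst ueq) (simp add: pcompose_add pcompose_mult ff)
  finally have "f * g + r = f * pcompose g ?s + pcompose r ?s" using ueq by simp
  then have heq: "f * (g - pcompose g ?s) = pcompose r ?s - r" by (simp add: algebra_simps)
  have rsdeg: "degree (pcompose r ?s) < p"
    using degree_pcompose_le[of r ?s] rdeg by simp
  have gfix: "pcompose g ?s = g"
  proof (rule ccontr)
    assume "pcompose g ?s \<noteq> g"
    then have "g - pcompose g ?s \<noteq> 0" by simp
    then have "degree (f * (g - pcompose g ?s)) \<ge> p"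
      using monic_mult_degree[OF lf] df by simp
    moreover have "degree (pcompose r ?s - r) < p"
      using degree_diff_le_max[of "pcompose r ?s" r] rsdeg rdeg by simp
    ultimately show False using heq by simp
  qed
  then have rfix: "pcompose r ?s = r" using heq by simp
  have "degree r = 0" using shift_fixed_const[OF assms(1-3) rfix rdeg] .
  then obtain c where rc: "r = [:c:]" by (metis degree_eq_zeroE)
  show ?case
  proof (cases "g = 0")
    case True
    then have "u = pcompose [:c:] f" using ueq rc by simp
    then show ?thesis by blast
  next
    case False
    have dfg: "degree (f * g) = p + degree g" using monic_mult_degree[OF lf False] df by simp
    have "degree u = degree (f * g)"
      unfolding ueq using dfg rdeg by (intro degree_add_eq_left) simp
    then have "degree g < degree u" using dfg p1 by simp
    then obtain q where "g = pcompose q f" using less gfix by blast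
    then have "u = pcompose (pCons c q) f" using ueq rc by (simp add: pcompose_pCons)
    then show ?thesis by blast
  qed
qed

theorem lemma2p4:
  fixes a :: "'a::comm_ring_1" and p :: nat
  assumes "prime p"
    and "CHAR('a) = p"
    and "a \<noteq> 0"
    and "\<forall>b::'a. a * b = 0 \<longrightarrow> b = 0"
  shows "fixed_ring (shift_aut a) = gen_subring (monom 1 p - smult (a ^ (p - 1)) [:0, 1:])"
proof -
  define f where "f = (monom 1 p - smult (a ^ (p - 1)) [:0, 1:] :: 'a poly)"
  have p1: "p > 1" using assms(1) prime_gt_1_nat by blast
  have cf: "coeff f n = (if n = p then 1 else if n = 1 then - (a ^ (p - 1)) else 0)" for n
    using p1 by (auto simp: f_def coeff_monom coeff_pCons split: nat.splits)
  have df: "degree f = p"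
  proof (rule antisym)
    show "degree f \<le> p" using p1 by (intro degree_le) (auto simp: cf)
    show "p \<le> degree f" using p1 by (intro le_degree) (simp add: cf)
  qed
  have lf: "lead_coeff f = 1" using df cf by simp
  have pow: "[:a, 1:] ^ p = [:a ^ p:] + monom 1 p"
  proof -
    have "[:a, 1:] ^ p = ([:a:] + [:0, 1:]) ^ p" by simp
    also have "\<dots> = [:a:] ^ p + [:0, 1:] ^ p"
      by (rule frob_add[OF assms(1)]) (simp add: assms(2))
    finally show ?thesis by (simp add: monom_altdef poly_const_pow)
  qed
  have ff: "pcompose f [:a, 1:] = f"
  proof -
    have ap: "a ^ (p - 1) * a = a ^ p" using p1
      by (metis Suc_diff_1 less_imp_le_nat order.strict_trans1 zero_less_one power_Suc2)
    have "pcompose f [:a, 1:] = [:a, 1:] ^ p - smult (a ^ (p - 1)) [:a, 1:]"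
      by (simp add: f_def pcompose_diff pcompose_monom pcompose_smult pcompose_pCons)
    also have "\<dots> = f"
      unfolding pow f_def using ap
      by (simp add: monom_altdef)
    finally show ?thesis .
  qed
  show ?thesis
    unfolding f_def[symmetric] fixed_ring_def gen_subring_def shift_aut_def
  proof (intro equalityI subsetI)
    fix u assume "u \<in> {u. pcompose u [:a, 1:] = u}"
    then obtain q where "u = pcompose q f"
      using fixed_in_gen[OF assms(1,2,4) lf df ff] by blast
    then show "u \<in> range (\<lambda>q. pcompose q f)" by blast
  next
    fix u assume "u \<in> range (\<lambda>q. pcompose q f)"
    then obtain q where "u = pcompose q f" by blast
    then show "u \<in> {u. pcompose u [:a, 1:] = u}"
      by (simp add: pcompose_assoc[symmetric] ff)
  qed
qed

end
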